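(* For any finite simple graph $X$, the mixed extended threshold GCA map $\mathbf{F}^\updownarrow$ has no periodic orbits of length $\ge 3$.
   Context: Let $X$ be a finite simple graph with vertices $1,\dots,n$; $d(v)$ is the degree of $v$ and $n[v]$ the closed neighborhood of $v$. An extended vertex state is $s_v=(x_v,k_v)\in\{0,1\}\times\{1,\dots,d(v)+1\}$; $\mathcal{S}$ is the product of these sets. Let $\sigma(x[v])=|\{u\in n[v]:x_u=1\}|$. The mixed vertex function maps $(x_v,k_v)$ to $(x_v',k_v')$ with $x_v'=1$ iff $\sigma(x[v])\ge k_v$ (else $0$), and $k_v'=k_v+1$ if $x_v=0$ and $\sigma(x[v])\ge k_v$; $k_v'=k_v-1$ if $x_v=1$ and $\sigma(x[v])<k_v$; $k_v'=k_v$ otherwise. The GCA map $\mathbf{F}^\updownarrow:\mathcal{S}\to\mathcal{S}$ applies this vertex function at all vertices simultaneously. A periodic orbit of length $m$ is a cycle of $m$ distinct states under iteration. *)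

theory Defs
  imports Main
begin

definition simple_graph :: "('a \<Rightarrow> 'a \<Rightarrow> bool) \<Rightarrow> bool" where
  "simple_graph E \<longleftrightarrow> (\<forall>u v. E u v \<longrightarrow> E v u) \<and> (\<forall>v. \<not> E v v)"

definition deg :: "('a \<Rightarrow> 'a \<Rightarrow> bool) \<Rightarrow> 'a \<Rightarrow> nat" where
  "deg E v = card {u. E v u}"

definition closed_nbhd :: "('a \<Rightarrow> 'a \<Rightarrow> bool) \<Rightarrow> 'a \<Rightarrow> 'a set" where
  "closed_nbhd E v = insert v {u. E v u}"

text \<open>Extended states: x_v as bool (True = 1), k_v as nat.\<close>
type_synonym 'a ext_state = "'a \<Rightarrow> bool \<times> nat"

definition ext_states :: "('a \<Rightarrow> 'a \<Rightarrow> bool) \<Rightarrow> 'a ext_state set" where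
  "ext_states E = {s. \<forall>v. 1 \<le> snd (s v) \<and> snd (s v) \<le> deg E v + 1}"

definition sigma :: "('a \<Rightarrow> 'a \<Rightarrow> bool) \<Rightarrow> 'a ext_state \<Rightarrow> 'a \<Rightarrow> nat" where
  "sigma E s v = card {u \<in> closed_nbhd E v. fst (s u)}"

definition mixed_vertex_fun :: "bool \<times> nat \<Rightarrow> nat \<Rightarrow> bool \<times> nat" where
  "mixed_vertex_fun xk \<sigma> =
     (let x = fst xk; k = snd xk in
      (k \<le> \<sigma>,
       if \<not> x \<and> k \<le> \<sigma> then k + 1
       else if x \<and> \<sigma> < k then k - 1
       else k))"

definition GCA_mixed :: "('a \<Rightarrow> 'a \<Rightarrow> bool) \<Rightarrow> 'a ext_state \<Rightarrow> 'a ext_state" where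
  "GCA_mixed E s = (\<lambda>v. mixed_vertex_fun (s v) (sigma E s v))"

definition periodic_orbit :: "('b \<Rightarrow> 'b) \<Rightarrow> 'b \<Rightarrow> nat \<Rightarrow> bool" where
  "periodic_orbit F s m \<longleftrightarrow> 0 < m \<and> (F ^^ m) s = s \<and> inj_on (\<lambda>i. (F ^^ i) s) {..<m}"

end

theory Submission
  imports Defs
begin

definition Xv :: "'a ext_state \<Rightarrow> 'a \<Rightarrow> int" where
  "Xv s v = (if fst (s v) then 1 else 0)"

definition cv :: "'a ext_state \<Rightarrow> 'a \<Rightarrow> int" where
  "cv s v = int (snd (s v)) - Xv s v"

definition hv :: "('a \<Rightarrow> 'a \<Rightarrow> bool) \<Rightarrow> 'a ext_state \<Rightarrow> 'a \<Rightarrow> int" where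
  "hv E s v = (\<Sum>u\<in>UNIV. if E v u then Xv s u else 0)"

lemma sigma_eq:
  fixes E :: "'a::finite \<Rightarrow> 'a \<Rightarrow> bool"
  assumes "simple_graph E"
  shows "int (sigma E s v) = Xv s v + hv E s v"
proof -
  have nv: "\<not> E v v" using assms by (simp add: simple_graph_def)
  have A: "{u \<in> closed_nbhd E v. fst (s u)} =
      (if fst (s v) then insert v {u. E v u \<and> fst (s u)} else {u. E v u \<and> fst (s u)})"
    by (auto simp: closed_nbhd_def)
  have B: "hv E s v = int (card {u. E v u \<and> fst (s u)})"
  proof -
    have "hv E s v = (\<Sum>u\<in>UNIV. if u \<in> {u. E v u \<and> fst (s u)} then 1 else 0)"
      unfolding hv_def Xv_def by (rule sum.cong) auto
    also have "\<dots> = int (card {u. E v u \<and> fst (s u)})"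
      by (simp add: sum.If_cases)
    finally show ?thesis .
  qed
  show ?thesis
    unfolding sigma_def A B using nv by (auto simp: Xv_def)
qed

lemma step_fst:
  fixes E :: "'a::finite \<Rightarrow> 'a \<Rightarrow> bool"
  assumes "simple_graph E"
  shows "fst (GCA_mixed E s v) \<longleftrightarrow> cv s v \<le> hv E s v"
  using sigma_eq[OF assms, of s v]
  by (auto simp: GCA_mixed_def mixed_vertex_fun_def Let_def cv_def)

lemma step_c:
  fixes E :: "'a::finite \<Rightarrow> 'a \<Rightarrow> bool"
  shows "cv (GCA_mixed E s) v = cv s v"
  by (auto simp: GCA_mixed_def mixed_vertex_fun_def Let_def cv_def Xv_def of_nat_diff)

lemma sym_sum:
  fixes E :: "'a::finite \<Rightarrow> 'a \<Rightarrow> bool"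
  assumes "simple_graph E"
  shows "(\<Sum>v\<in>UNIV. Xv b v * hv E a v) = (\<Sum>v\<in>UNIV. Xv a v * hv E b v)"
proof -
  have sym: "E u v = E v u" for u v using assms by (auto simp: simple_graph_def)
  have "(\<Sum>v\<in>UNIV. Xv b v * hv E a v) = (\<Sum>v\<in>UNIV. \<Sum>u\<in>UNIV. if E v u then Xv b v * Xv a u else 0)"
    unfolding hv_def sum_distrib_left by (intro sum.cong) auto
  also have "\<dots> = (\<Sum>u\<in>UNIV. \<Sum>v\<in>UNIV. if E v u then Xv b v * Xv a u else 0)"
    by (rule sum.swap)
  also have "\<dots> = (\<Sum>v\<in>UNIV. Xv a v * hv E b v)"
    unfolding hv_def sum_distrib_left by (intro sum.cong) (auto simp: sym mult.commute)
  finally show ?thesis .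
qed

definition LL :: "('a \<Rightarrow> 'a \<Rightarrow> bool) \<Rightarrow> 'a ext_state \<Rightarrow> 'a ext_state \<Rightarrow> int" where
  "LL E a b = - 2 * (\<Sum>v\<in>UNIV. Xv b v * hv E a v)
      + (\<Sum>v\<in>UNIV. (2 * cv a v - 1) * (Xv b v + Xv a v))"

lemma term_nonneg:
  fixes E :: "'a::finite \<Rightarrow> 'a \<Rightarrow> bool"
  assumes "simple_graph E"
  shows "0 \<le> (Xv (GCA_mixed E b) v - Xv a v) * (2 * hv E b v - 2 * cv b v + 1)"
    and "(Xv (GCA_mixed E b) v - Xv a v) * (2 * hv E b v - 2 * cv b v + 1) = 0
         \<Longrightarrow> Xv (GCA_mixed E b) v = Xv a v"
  using step_fst[OF assms, of b v]
  by (auto simp: Xv_def split: if_splits)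

lemma energy:
  fixes E :: "'a::finite \<Rightarrow> 'a \<Rightarrow> bool"
  assumes g: "simple_graph E" and b: "b = GCA_mixed E a"
  shows "LL E b (GCA_mixed E b) \<le> LL E a b"
    and "LL E b (GCA_mixed E b) = LL E a b \<Longrightarrow> Xv (GCA_mixed E b) = Xv a"
proof -
  let ?c = "GCA_mixed E b"
  have cb: "cv b v = cv a v" for v using b step_c by metis
  have "LL E a b - LL E b ?c =
     (\<Sum>v\<in>UNIV. (Xv ?c v - Xv a v) * (2 * hv E b v - 2 * cv b v + 1))"
  proof -
    have "LL E a b - LL E b ?c = - 2 * (\<Sum>v\<in>UNIV. Xv a v * hv E b v)
      + (\<Sum>v\<in>UNIV. (2 * cv b v - 1) * (Xv b v + Xv a v))
      + 2 * (\<Sum>v\<in>UNIV. Xv ?c v * hv E b v)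
      - (\<Sum>v\<in>UNIV. (2 * cv b v - 1) * (Xv ?c v + Xv b v))"
      unfolding LL_def sym_sum[OF g, of b a] by (simp add: cb)
    also have "\<dots> = (\<Sum>v\<in>UNIV. (Xv ?c v - Xv a v) * (2 * hv E b v - 2 * cv b v + 1))"
      by (simp add: sum_subtractf[symmetric] sum.distrib[symmetric] sum_distrib_left
          algebra_simps)
    finally show ?thesis .
  qed
  note D = this
  have nn: "\<And>v. 0 \<le> (Xv ?c v - Xv a v) * (2 * hv E b v - 2 * cv b v + 1)"
    using term_nonneg(1)[OF g] by blast
  show "LL E b ?c \<le> LL E a b" 
  proof -
    have "0 \<le> (\<Sum>v\<in>UNIV. (Xv ?c v - Xv a v) * (2 * hv E b v - 2 * cv b v + 1))"
      by (rule sum_nonneg) (rule nn)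
    then show ?thesis using D by linarith
  qed
  assume "LL E b ?c = LL E a b"
  then have "(\<Sum>v\<in>UNIV. (Xv ?c v - Xv a v) * (2 * hv E b v - 2 * cv b v + 1)) = 0"
    using D by simp
  then have "\<forall>v\<in>UNIV. (Xv ?c v - Xv a v) * (2 * hv E b v - 2 * cv b v + 1) = 0"
    by (subst sum_nonneg_eq_0_iff[symmetric]) (auto intro: nn)
  then show "Xv ?c = Xv a" using term_nonneg(2)[OF g] by blast
qed

theorem proposition3p8:
  fixes E :: "'a::finite \<Rightarrow> 'a \<Rightarrow> bool"
    and s :: "'a ext_state" and m :: nat
  assumes "simple_graph E"
    and "s \<in> ext_states E"
    and "periodic_orbit (GCA_mixed E) s m"
  shows "m < 3"
proof (rule ccontr)
  assume "\<not> m < 3"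
  then have m3: "m \<ge> 3" by simp
  let ?F = "GCA_mixed E"
  define x where "x t = (?F ^^ t) s" for t
  have xs: "x (Suc t) = ?F (x t)" for t by (simp add: x_def)
  define L where "L t = LL E (x t) (x (Suc t))" for t
  have dec: "L (Suc t) \<le> L t" for t
    unfolding L_def using energy(1)[OF assms(1) xs[of t]] by (simp add: xs)
  have xm: "x m = x 0" using assms(3) by (simp add: x_def periodic_orbit_def)
  have Lm: "L m = L 0" unfolding L_def using xm xs by metis
  have "L (Suc n) \<le> L 1" for n
  proof (induction n)
    case 0 then show ?case by simp
  next
    case (Suc n) then show ?case using dec[of "Suc n"] by simp
  qed
  from this[of "m - 1"] m3 have "L m \<le> L 1" by simp
  then have "L 1 = L 0" using Lm dec[of 0] by simp
  then have X2: "Xv (x 2) = Xv (x 0)"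
    using energy(2)[OF assms(1) xs[of 0]] unfolding L_def by (simp add: xs numeral_2_eq_2)
  have cc: "cv (x t) = cv (x 0)" for t
    by (induction t) (auto simp: xs step_c)
  have "x 2 = x 0"
  proof
    fix v
    have f: "fst (x 2 v) = fst (x 0 v)" using fun_cong[OF X2, of v] by (auto simp: Xv_def split: if_splits)
    have "int (snd (x 2 v)) = int (snd (x 0 v))"
      using fun_cong[OF X2, of v] fun_cong[OF cc[of 2], of v] by (simp add: cv_def)
    then show "x 2 v = x 0 v" using f by (simp add: prod_eq_iff)
  qed
  moreover have "inj_on x {..<m}" using assms(3) unfolding x_def periodic_orbit_def by (simp add: x_def[abs_def])
  ultimately show False using m3 by (auto dest: inj_onD[of _ _ 2 0])
qed

end
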